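(* Let $G$ be a digraph and $r\ge1$. Then the distance-$r$ VC-dimension of $G$ is at most $(r+2)\cdot(2\,\mathrm{wcol}_r(G))^2$.
   Context: For a linear order $L$ of $V(G)$, $u$ is weakly $r$-reachable from $v$ if there is a directed path of length at most $r$ from $u$ to $v$ or from $v$ to $u$ on which $u$ is the $L$-minimum; $\mathrm{WReach}_r[G,L,v]$ is the set of such $u$; $\mathrm{wcol}_r(G)=\min_L\max_{v}|\mathrm{WReach}_r[G,L,v]|$. $N_r^-(v)$ is the set of vertices from which $v$ is reachable by a directed path of length at most $r$. The distance-$r$ VC-dimension of $G$ is the VC-dimension of the set family $\{N_r^-(v) : v\in V(G)\}$ over ground set $V(G)$, i.e. the maximum size of a set $X\subseteq V(G)$ with $\{X\cap N_r^-(v): v\in V(G)\}=2^X$. *)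

theory Defs
  imports Main
begin

text \<open>A directed path is a nonempty list of pairwise distinct vertices, consecutive ones joined by arcs;
  its length is the number of arcs.\<close>

definition dipath :: "'a set \<Rightarrow> ('a \<times> 'a) set \<Rightarrow> 'a list \<Rightarrow> bool" where
  "dipath V E xs \<longleftrightarrow> xs \<noteq> [] \<and> distinct xs \<and> set xs \<subseteq> V \<and>
     (\<forall>i. Suc i < length xs \<longrightarrow> (xs ! i, xs ! Suc i) \<in> E)"

definition dipath_le :: "'a set \<Rightarrow> ('a \<times> 'a) set \<Rightarrow> nat \<Rightarrow> 'a \<Rightarrow> 'a \<Rightarrow> 'a list \<Rightarrow> bool" where
  "dipath_le V E r u v xs \<longleftrightarrow> dipath V E xs \<and> length xs \<le> Suc r \<and> hd xs = u \<and> last xs = v"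

definition WReach :: "'a set \<Rightarrow> ('a \<times> 'a) set \<Rightarrow> nat \<Rightarrow> ('a \<times> 'a) set \<Rightarrow> 'a \<Rightarrow> 'a set" where
  "WReach V E r L v = {u \<in> V. \<exists>xs. (dipath_le V E r u v xs \<or> dipath_le V E r v u xs) \<and>
                                  (\<forall>w \<in> set xs. (u, w) \<in> L)}"

definition wcol :: "'a set \<Rightarrow> ('a \<times> 'a) set \<Rightarrow> nat \<Rightarrow> nat" where
  "wcol V E r = Min ((\<lambda>L. Max (insert 0 ((\<lambda>v. card (WReach V E r L v)) ` V)))
                        ` {L. linear_order_on V L})"

definition in_nbhd :: "'a set \<Rightarrow> ('a \<times> 'a) set \<Rightarrow> nat \<Rightarrow> 'a \<Rightarrow> 'a set" where
  "in_nbhd V E r v = {u \<in> V. \<exists>xs. dipath_le V E r u v xs}"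

definition shattered_by :: "'a set \<Rightarrow> 'a set set \<Rightarrow> bool" where
  "shattered_by X F \<longleftrightarrow> (\<lambda>S. X \<inter> S) ` F = Pow X"

definition vc_dim :: "'a set \<Rightarrow> 'a set set \<Rightarrow> nat" where
  "vc_dim U F = Max (insert 0 {card X | X. X \<subseteq> U \<and> shattered_by X F})"

definition dist_vc_dim :: "'a set \<Rightarrow> ('a \<times> 'a) set \<Rightarrow> nat \<Rightarrow> nat" where
  "dist_vc_dim V E r = vc_dim V (in_nbhd V E r ` V)"

end

theory Submission
  imports Defs
begin

definition Rw :: "'a set \<Rightarrow> ('a \<times> 'a) set \<Rightarrow> nat \<Rightarrow> 'a \<Rightarrow> 'a \<Rightarrow> bool" where
  "Rw V E k x y \<longleftrightarrow> x \<in> V \<and> (\<exists>j\<le>k. (x, y) \<in> E ^^ j)"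

lemma dipath_take:
  assumes "dipath V E xs" "k < length xs"
  shows "dipath V E (take (Suc k) xs)"
  using assms unfolding dipath_def
  by (auto simp: nth_take dest: in_set_takeD)

lemma dipath_drop:
  assumes "dipath V E xs" "k < length xs"
  shows "dipath V E (drop k xs)"
  using assms unfolding dipath_def
  by (auto simp: nth_drop dest: in_set_dropD)

lemma dipath_relpow:
  "dipath V E xs \<Longrightarrow> (hd xs, last xs) \<in> E ^^ (length xs - 1)"
proof (induction xs)
  case Nil
  then show ?case by (simp add: dipath_def)
next
  case (Cons a xs)
  show ?case
  proof (cases xs)
    case Nil
    then show ?thesis by simp
  next
    case (Cons b ys)
    have d: "dipath V E xs" using Cons.prems Cons unfolding dipath_def
      by (auto simp: Cons)
    have e: "(a, b) \<in> E" using Cons.prems Cons unfolding dipath_def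
      by (metis length_Cons nth_Cons_0 nth_Cons_Suc zero_less_Suc Suc_less_eq)
    from Cons.IH[OF d] have "(b, last xs) \<in> E ^^ (length xs - 1)" using Cons by simp
    then have "(a, last xs) \<in> E ^^ Suc (length xs - 1)" using e relpow_Suc_I2 by metis
    then show ?thesis using Cons by simp
  qed
qed

lemma relpow_dipath:
  assumes "E \<subseteq> V \<times> V"
  shows "(a, b) \<in> E ^^ j \<Longrightarrow> a \<in> V \<Longrightarrow> \<exists>xs. dipath V E xs \<and> hd xs = a \<and> last xs = b \<and> length xs \<le> Suc j"
proof (induction j arbitrary: b)
  case 0
  then show ?case by (intro exI[of _ "[a]"]) (auto simp: dipath_def)
next
  case (Suc j)
  from Suc.prems obtain c where ac: "(a, c) \<in> E ^^ j" and cb: "(c, b) \<in> E" by auto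
  from Suc.IH[OF ac Suc.prems(2)] obtain xs where xs: "dipath V E xs" "hd xs = a" "last xs = c" "length xs \<le> Suc j"
    by blast
  show ?case
  proof (cases "b \<in> set xs")
    case True
    then obtain k where k: "k < length xs" "xs ! k = b" by (auto simp: in_set_conv_nth)
    have "dipath V E (take (Suc k) xs)" using dipath_take[OF xs(1) k(1)] .
    moreover have "hd (take (Suc k) xs) = a" using xs k by (cases xs) auto
    moreover have "last (take (Suc k) xs) = b" using k by (simp add: take_Suc_conv_app_nth)
    ultimately show ?thesis using xs k by (intro exI[of _ "take (Suc k) xs"]) auto
  next
    case False
    have bV: "b \<in> V" using cb assms by auto
    have xne: "xs \<noteq> []" using xs(1) by (simp add: dipath_def)
    have "dipath V E (xs @ [b])"
      unfolding dipath_def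
    proof (intro conjI allI impI)
      show "xs @ [b] \<noteq> []" by simp
      show "distinct (xs @ [b])" using False xs(1) by (simp add: dipath_def)
      show "set (xs @ [b]) \<subseteq> V" using bV xs(1) by (simp add: dipath_def)
      fix i assume i: "Suc i < length (xs @ [b])"
      show "((xs @ [b]) ! i, (xs @ [b]) ! Suc i) \<in> E"
      proof (cases "Suc i < length xs")
        case True
        then show ?thesis using xs(1) by (simp add: dipath_def nth_append)
      next
        case False
        then have "Suc i = length xs" using i by simp
        then have ii: "i = length xs - 1" by simp
        have "(xs @ [b]) ! i = last xs" "(xs @ [b]) ! Suc i = b" using xne ii
          by (auto simp: nth_append last_conv_nth)
        then show ?thesis using cb xs(3) by simp
      qed
    qed
    then show ?thesis using xs xne by (intro exI[of _ "xs @ [b]"]) auto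
  qed
qed

lemma Rw_iff:
  assumes "E \<subseteq> V \<times> V"
  shows "Rw V E k x y \<longleftrightarrow> (\<exists>xs. dipath_le V E k x y xs)"
proof
  assume "Rw V E k x y"
  then obtain j where "x \<in> V" "j \<le> k" "(x, y) \<in> E ^^ j" by (auto simp: Rw_def)
  then show "\<exists>xs. dipath_le V E k x y xs"
    using relpow_dipath[OF assms] unfolding dipath_le_def by (meson le_trans not_less_eq_eq)
next
  assume "\<exists>xs. dipath_le V E k x y xs"
  then obtain xs where xs: "dipath_le V E k x y xs" by blast
  then have "(x, y) \<in> E ^^ (length xs - 1)" using dipath_relpow by (auto simp: dipath_le_def)
  moreover have "x \<in> V" using xs by (cases xs) (auto simp: dipath_le_def dipath_def)
  ultimately show "Rw V E k x y" using xs unfolding Rw_def dipath_le_def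
    by (intro conjI exI[of _ "length xs - 1"]) auto
qed


lemma L_min:
  assumes lin: "linear_order_on V L" and "finite A" "A \<noteq> {}" "A \<subseteq> V"
  shows "\<exists>m\<in>A. \<forall>w\<in>A. (m, w) \<in> L"
  using assms(2,3,4)
proof (induction A rule: finite_ne_induct)
  case (singleton x)
  then show ?case using lin by (auto simp: linear_order_on_def partial_order_on_def preorder_on_def refl_on_def)
next
  case (insert x F)
  then obtain m where m: "m \<in> F" "\<forall>w\<in>F. (m, w) \<in> L" by auto
  have tr: "trans L" and tot: "total_on V L" and rf: "refl_on V L"
    using lin by (auto simp: linear_order_on_def partial_order_on_def preorder_on_def)
  have xV: "x \<in> V" and mV: "m \<in> V" using insert m by auto
  show ?case
  proof (cases "(x, m) \<in> L")
    case True
    then have "\<forall>w\<in>F. (x, w) \<in> L" using m tr by (meson transD)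
    moreover have "(x, x) \<in> L" using rf xV by (simp add: refl_on_def)
    ultimately show ?thesis by auto
  next
    case False
    then have "(m, x) \<in> L" using tot xV mV rf by (cases "x = m") (auto simp: total_on_def refl_on_def)
    then show ?thesis using m by auto
  qed
qed

lemma Rw_mono: "Rw V E a x y \<Longrightarrow> a \<le> b \<Longrightarrow> Rw V E b x y"
  unfolding Rw_def by (meson le_trans)

lemma Rw_trans: "Rw V E a x y \<Longrightarrow> Rw V E b y z \<Longrightarrow> Rw V E (a + b) x z"
proof -
  assume "Rw V E a x y" "Rw V E b y z"
  then obtain i j where "x \<in> V" "i \<le> a" "(x, y) \<in> E ^^ i" "j \<le> b" "(y, z) \<in> E ^^ j"
    unfolding Rw_def by blast
  then have "(x, z) \<in> E ^^ (i + j)" by (auto simp: relpow_add)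
  then show ?thesis unfolding Rw_def using \<open>x \<in> V\<close> \<open>i \<le> a\<close> \<open>j \<le> b\<close> by (intro conjI exI[of _ "i + j"]) auto
qed

lemma nbhd_witness:
  assumes EV: "E \<subseteq> V \<times> V" and lin: "linear_order_on V L" and x: "x \<in> in_nbhd V E r v"
  shows "\<exists>m a b. m \<in> WReach V E r L v \<and> m \<in> WReach V E r L x \<and> a + b \<le> r
           \<and> Rw V E a x m \<and> Rw V E b m v"
proof -
  from x obtain xs where xs: "dipath_le V E r x v xs" by (auto simp: in_nbhd_def)
  have dp: "dipath V E xs" and len: "length xs \<le> Suc r" and hx: "hd xs = x" and lv: "last xs = v"
    using xs by (auto simp: dipath_le_def)
  have ne: "xs \<noteq> []" "set xs \<subseteq> V" using dp by (auto simp: dipath_def)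
  obtain m where m: "m \<in> set xs" "\<forall>w\<in>set xs. (m, w) \<in> L"
    using L_min[OF lin, of "set xs"] ne by auto
  obtain k where k: "k < length xs" "xs ! k = m" using m(1) by (auto simp: in_set_conv_nth)
  have mV: "m \<in> V" using m ne by auto
  define ys where "ys = drop k xs"
  define zs where "zs = take (Suc k) xs"
  have dys: "dipath_le V E r m v ys"
    unfolding dipath_le_def ys_def using dipath_drop[OF dp k(1)] k len lv
    by (auto simp: hd_drop_conv_nth)
  have h1: "hd zs = x" unfolding zs_def using hx ne(1) by (cases xs) auto
  have h2: "last zs = m" unfolding zs_def using k by (simp add: take_Suc_conv_app_nth)
  have h3: "length zs \<le> Suc r" unfolding zs_def using len by simp
  have dzs: "dipath_le V E r x m zs"
    unfolding dipath_le_def using dipath_take[OF dp k(1)] h1 h2 h3 zs_def by blast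
  have "\<forall>w\<in>set ys. (m, w) \<in> L" using m unfolding ys_def by (meson in_set_dropD)
  then have w1: "m \<in> WReach V E r L v" using dys mV unfolding WReach_def by blast
  have "\<forall>w\<in>set zs. (m, w) \<in> L" using m unfolding zs_def by (meson in_set_takeD)
  then have w2: "m \<in> WReach V E r L x" using dzs mV unfolding WReach_def by blast
  have "dipath_le V E k x m zs" using dzs k unfolding dipath_le_def zs_def by auto
  then have r1: "Rw V E k x m" using Rw_iff[OF EV] by blast
  have "dipath_le V E (length xs - Suc k) m v ys" using dys k unfolding dipath_le_def ys_def by auto
  then have r2: "Rw V E (length xs - Suc k) m v" using Rw_iff[OF EV] by blast
  have "k + (length xs - Suc k) \<le> r" using k len by auto
  then show ?thesis using w1 w2 r1 r2 by blast
qed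

lemma count_small_subsets:
  fixes K :: "'a set"
  assumes "finite K"
  shows "card {A. A \<subseteq> K \<and> card A \<le> c} \<le> (card K + 1) ^ c"
proof -
  define B where "B = insert None (Some ` K)"
  define Ls where "Ls = {xs. set xs \<subseteq> B \<and> length xs = c}"
  define f where "f = (\<lambda>xs::'a option list. {y. Some y \<in> set xs})"
  have sub: "{A. A \<subseteq> K \<and> card A \<le> c} \<subseteq> f ` Ls"
  proof
    fix A assume "A \<in> {A. A \<subseteq> K \<and> card A \<le> c}"
    then have A: "A \<subseteq> K" "card A \<le> c" by auto
    have "finite A" using A assms finite_subset by auto
    then obtain ys where ys: "set ys = A" "distinct ys" using finite_distinct_list by blast
    then have ly: "length ys = card A" using distinct_card by fastforce
    define xs where "xs = map Some ys @ replicate (c - card A) None"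
    have "set xs \<subseteq> set (map Some ys) \<union> {None}" unfolding xs_def by auto
    also have "\<dots> \<subseteq> B" unfolding B_def using ys A by auto
    finally have s1: "set xs \<subseteq> B" .
    have "length xs = c" using ly A unfolding xs_def by simp
    then have "xs \<in> Ls" using s1 unfolding Ls_def by blast
    moreover have "f xs = A" unfolding f_def xs_def using ys by auto
    ultimately show "A \<in> f ` Ls" by (metis image_eqI)
  qed
  have fB: "finite B" unfolding B_def using assms by simp
  have fin: "finite Ls" unfolding Ls_def using fB by (rule finite_lists_length_eq)
  have "card {A. A \<subseteq> K \<and> card A \<le> c} \<le> card (f ` Ls)"
    using sub fin by (intro card_mono) auto
  also have "\<dots> \<le> card Ls" using fin by (rule card_image_le)
  also have "\<dots> = card B ^ c" unfolding Ls_def using fB by (rule card_lists_length_eq)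
  also have "card B = card K + 1" unfolding B_def using assms by (simp add: card_image)
  finally show ?thesis .
qed

lemma step_aux: "(p::nat) \<ge> 13 \<Longrightarrow> (p + 1) ^ 4 \<le> 2 * p ^ 4"
proof -
  assume p: "p \<ge> 13"
  have e: "(p + 1) ^ 4 = p^4 + 4*p^3 + 6*p^2 + 4*p + 1" by (simp add: power_def algebra_simps numeral_eq_Suc)
  have "p^4 = p * p^3" by (simp add: eval_nat_numeral)
  moreover have "13 * p^3 \<le> p * p^3" using p by (rule mult_le_mono1)
  ultimately have a: "13 * p^3 \<le> p^4" by simp
  have "p^3 = p * p^2" by (simp add: eval_nat_numeral)
  moreover have "11 * p^2 \<le> p * p^2" using p by (intro mult_le_mono1) simp
  ultimately have a2: "11 * p^2 \<le> p^3" by simp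
  have "p \<le> p^2" "1 \<le> p^2" using p by (auto simp: power2_eq_square)
  then show ?thesis using e a a2 by linarith
qed

lemma pow_aux: "q \<ge> 12 \<Longrightarrow> (q + 1) ^ 4 < 144 * (2::nat) ^ q"
proof (induction q rule: dec_induct)
  case base
  then show ?case by simp
next
  case (step q)
  have "(Suc q + 1) ^ 4 \<le> 2 * (q + 1) ^ 4"
    using step_aux[of "q+1"] step(1) by simp
  then show ?case using step by simp
qed

lemma final_arith:
  fixes c d r :: nat
  assumes r: "r \<ge> 1" and h: "2 ^ d \<le> (c * d * (r + 1) + 1) ^ c"
  shows "d \<le> (r + 2) * (2 * c) ^ 2"
proof (rule ccontr)
  assume "\<not> ?thesis"
  then have dbig: "d > (r + 2) * (2 * c) ^ 2" by simp
  show False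
  proof (cases "c = 0")
    case True
    then have "d > 0" using dbig by simp
    then have "(2::nat) ^ d > 1" using one_less_power by (metis one_less_numeral_iff semiring_norm(76))
    then show False using h True by simp
  next
    case False
    then have c1: "c \<ge> 1" by simp
    have e4: "(r + 2) * (2 * c) ^ 2 = 4 * c * c * (r + 2)" by (simp add: power2_eq_square algebra_simps)
    have "c * (r + 1) \<le> 4 * c * c * (r + 2)"
    proof -
      have "c * (r + 1) \<le> c * (r + 2)" by simp
      also have "\<dots> \<le> (4 * c) * (c * (r + 2))" using c1 by simp
      finally show ?thesis by (simp add: algebra_simps)
    qed
    then have h1: "c * (r + 1) \<le> d - 1" using dbig e4 by linarith
    have d1: "d \<ge> 1" using h1 dbig by linarith
    have "c * d * (r + 1) = d * (c * (r + 1))" by (simp add: algebra_simps)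
    also have "\<dots> \<le> d * (d - 1)" using h1 by simp
    finally have "c * d * (r + 1) + 1 \<le> d * (d - 1) + 1" by simp
    also have "\<dots> \<le> d * d" using d1 by (cases d) auto
    finally have N: "c * d * (r + 1) + 1 \<le> d * d" .
    have "12 * c * c \<le> 4 * c * c * (r + 2)" using r by simp
    then have d12: "12 * c * c \<le> d" using dbig e4 by linarith
    define q where "q = d div c"
    have qc: "q * c \<le> d" unfolding q_def by (metis div_times_less_eq_dividend mult.commute)
    have dq: "d < (q + 1) * c" unfolding q_def using c1
      by (metis add.commute div_mult_mod_eq mod_less_divisor mult.commute nat_add_left_cancel_less
          distrib_left mult_1_right not_one_le_zero gr0I)
    have "12 * c * c div c \<le> q" unfolding q_def using d12 by (rule div_le_mono)
    then have q12: "12 * c \<le> q" using c1 by simp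
    then have q12': "q \<ge> 12" using c1 by linarith
    have sq4: "\<And>x::nat. (x * x) ^ 2 = x ^ 4" by (simp add: eval_nat_numeral mult.assoc)
    have "144 * ((q + 1) * c) ^ 2 = ((q + 1) * (12 * c)) ^ 2" by (simp add: power2_eq_square algebra_simps)
    also have "\<dots> \<le> ((q + 1) * q) ^ 2" using q12 by (intro power_mono mult_le_mono2) simp_all
    also have "\<dots> \<le> ((q + 1) * (q + 1)) ^ 2" by (intro power_mono) auto
    also have "\<dots> = (q + 1) ^ 4" using sq4 by blast
    also have "\<dots> < 144 * 2 ^ q" using pow_aux[OF q12'] .
    finally have key: "((q + 1) * c) ^ 2 < 2 ^ q" by simp
    have "(c * d * (r + 1) + 1) ^ c \<le> (d * d) ^ c" using N by (rule power_mono) simp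
    also have "\<dots> \<le> (((q + 1) * c) * ((q + 1) * c)) ^ c" using dq
      by (intro power_mono mult_mono) auto
    also have "\<dots> = (((q + 1) * c) ^ 2) ^ c" by (simp add: power2_eq_square)
    also have "\<dots> < (2 ^ q) ^ c" using key c1 by (intro power_strict_mono) auto
    also have "\<dots> = 2 ^ (q * c)" by (simp add: power_mult)
    also have "\<dots> \<le> 2 ^ d" using qc by (intro power_increasing) auto
    finally show False using h by simp
  qed
qed

lemma exists_good_L:
  assumes fin: "finite V"
  shows "\<exists>L. linear_order_on V L \<and> (\<forall>v\<in>V. card (WReach V E r L v) \<le> wcol V E r)"
proof -
  define F where "F = {L. linear_order_on V L}"
  define h where "h = (\<lambda>L. Max (insert 0 ((\<lambda>v. card (WReach V E r L v)) ` V)))"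
  have "F \<subseteq> Pow (V \<times> V)" unfolding F_def
    by (auto simp: linear_order_on_def partial_order_on_def preorder_on_def)
  then have fF: "finite F" using fin by (meson finite_Pow_iff finite_SigmaI finite_subset)
  obtain L0 :: "('a \<times> 'a) set" where "well_order_on V L0" using well_order_on by blast
  then have "L0 \<in> F" unfolding F_def well_order_on_def by simp
  then have "h ` F \<noteq> {}" by auto
  then have "Min (h ` F) \<in> h ` F" using fF by (intro Min_in) auto
  then obtain L where L: "L \<in> F" "h L = Min (h ` F)" by auto
  then have hL: "h L = wcol V E r" unfolding wcol_def F_def h_def by simp
  have "\<forall>v\<in>V. card (WReach V E r L v) \<le> h L"
    unfolding h_def using fin by (intro ballI Max_ge) auto
  then show ?thesis using L hL unfolding F_def by auto
qed

lemma shattered_bound: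
  fixes V :: "'a set"
  assumes fin: "finite V" and EV: "E \<subseteq> V \<times> V" and r: "r \<ge> 1"
    and lin: "linear_order_on V L" and cL: "\<forall>v\<in>V. card (WReach V E r L v) \<le> c"
    and XV: "X \<subseteq> V" and sh: "shattered_by X (in_nbhd V E r ` V)"
  shows "card X \<le> (r + 2) * (2 * c) ^ 2"
proof -
  define d where "d = card X"
  have fX: "finite X" using XV fin finite_subset by auto
  define S where "S = (\<Union>x\<in>X. WReach V E r L x)"
  have WV: "\<And>v. WReach V E r L v \<subseteq> V" unfolding WReach_def by auto
  have fS: "finite S" unfolding S_def using WV fin fX by (meson finite_UN_I finite_subset)
  have cS: "card S \<le> c * d"
  proof -
    have "card S \<le> (\<Sum>x\<in>X. card (WReach V E r L x))" unfolding S_def using fX by (rule card_UN_le)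
    also have "\<dots> \<le> (\<Sum>x\<in>X. c)" using cL XV by (intro sum_mono) auto
    finally show ?thesis unfolding d_def by (simp add: mult.commute)
  qed
  define g where "g = (\<lambda>v m. LEAST b. Rw V E b m v)"
  define T where "T = (\<lambda>v. (\<lambda>m. (m, g v m)) ` {m \<in> S \<inter> WReach V E r L v. Rw V E r m v})"
  define \<Phi> where "\<Phi> = (\<lambda>A. {x \<in> X. \<exists>(m, b)\<in>A. Rw V E (r - b) x m})"
  define K where "K = S \<times> {0..r}"
  have fK: "finite K" unfolding K_def using fS by simp
  have "card K = card S * (r + 1)" unfolding K_def by (simp add: card_cartesian_product)
  moreover have "card S * (r + 1) \<le> c * d * (r + 1)" using cS by (rule mult_le_mono1)
  ultimately have cK: "card K \<le> c * d * (r + 1)" by simp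
  have trace: "X \<inter> in_nbhd V E r v = \<Phi> (T v)" if vV: "v \<in> V" for v
  proof
    show "X \<inter> in_nbhd V E r v \<subseteq> \<Phi> (T v)"
    proof
      fix x assume x: "x \<in> X \<inter> in_nbhd V E r v"
      then obtain m a b where m: "m \<in> WReach V E r L v" "m \<in> WReach V E r L x" "a + b \<le> r"
        "Rw V E a x m" "Rw V E b m v"
        using nbhd_witness[OF EV lin] by blast
      have mS: "m \<in> S" using m(2) x unfolding S_def by blast
      have rr: "Rw V E r m v" using Rw_mono[OF m(5)] m(3) by simp
      have gb: "g v m \<le> b" unfolding g_def using m(5) by (rule Least_le)
      have "Rw V E (r - g v m) x m" using Rw_mono[OF m(4)] m(3) gb by simp
      moreover have "(m, g v m) \<in> T v" unfolding T_def using mS m(1) rr by blast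
      ultimately show "x \<in> \<Phi> (T v)" unfolding \<Phi>_def using x by blast
    qed
  next
    show "\<Phi> (T v) \<subseteq> X \<inter> in_nbhd V E r v"
    proof
      fix x assume x: "x \<in> \<Phi> (T v)"
      then obtain m where x1: "x \<in> X" and m: "m \<in> S" "m \<in> WReach V E r L v" "Rw V E r m v"
        and xm: "Rw V E (r - g v m) x m"
        unfolding \<Phi>_def T_def by blast
      have g1: "Rw V E (g v m) m v" unfolding g_def using m(3) by (rule LeastI)
      have g2: "g v m \<le> r" unfolding g_def using m(3) by (rule Least_le)
      have "Rw V E (r - g v m + g v m) x v" using Rw_trans[OF xm g1] .
      then have "Rw V E r x v" using g2 by simp
      then obtain xs where "dipath_le V E r x v xs" using Rw_iff[OF EV] by blast
      moreover have "x \<in> V" using x1 XV by auto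
      ultimately show "x \<in> X \<inter> in_nbhd V E r v" unfolding in_nbhd_def using x1 by blast
    qed
  qed
  have "Pow X = (\<lambda>v. X \<inter> in_nbhd V E r v) ` V"
    using sh unfolding shattered_by_def by (simp add: image_image)
  also have "\<dots> = \<Phi> ` (T ` V)" using trace by (auto simp: image_image)
  finally have PX: "Pow X = \<Phi> ` (T ` V)" .
  have TV: "T ` V \<subseteq> {A. A \<subseteq> K \<and> card A \<le> c}"
  proof
    fix A assume "A \<in> T ` V"
    then obtain v where v: "v \<in> V" "A = T v" by blast
    have "A \<subseteq> K"
    proof
      fix p assume "p \<in> A"
      then obtain m where "m \<in> S" "Rw V E r m v" "p = (m, g v m)" using v unfolding T_def by blast
      moreover have "g v m \<le> r" unfolding g_def using \<open>Rw V E r m v\<close> by (rule Least_le)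
      ultimately show "p \<in> K" unfolding K_def by auto
    qed
    moreover have "card A \<le> c"
    proof -
      have "card A \<le> card {m \<in> S \<inter> WReach V E r L v. Rw V E r m v}"
        unfolding v T_def by (rule card_image_le) (use fS in auto)
      also have "\<dots> \<le> card (WReach V E r L v)"
        by (rule card_mono) (use WV fin in \<open>auto intro: finite_subset[OF WV fin]\<close>)
      also have "\<dots> \<le> c" using cL v by auto
      finally show ?thesis .
    qed
    ultimately show "A \<in> {A. A \<subseteq> K \<and> card A \<le> c}" by blast
  qed
  have fT: "finite (T ` V)" using fin by simp
  have "2 ^ d = card (Pow X)" unfolding d_def using fX by (simp add: card_Pow)
  also have "\<dots> \<le> card (T ` V)" unfolding PX using fT by (rule card_image_le)
  also have "\<dots> \<le> card {A. A \<subseteq> K \<and> card A \<le> c}"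
    using TV by (rule card_mono[rotated]) (use fK in auto)
  also have "\<dots> \<le> (card K + 1) ^ c" using fK by (rule count_small_subsets)
  also have "\<dots> \<le> (c * d * (r + 1) + 1) ^ c" using cK by (intro power_mono) auto
  finally have "2 ^ d \<le> (c * d * (r + 1) + 1) ^ c" .
  then show ?thesis unfolding d_def[symmetric] using final_arith[OF r] by blast
qed

theorem mainTheorem15:
  fixes V :: "'a set" and E :: "('a \<times> 'a) set" and r :: nat
  assumes "finite V" and "E \<subseteq> V \<times> V" and "r \<ge> 1"
  shows "dist_vc_dim V E r \<le> (r + 2) * (2 * wcol V E r) ^ 2"
proof -
  obtain L where lin: "linear_order_on V L" and cL: "\<forall>v\<in>V. card (WReach V E r L v) \<le> wcol V E r"
    using exists_good_L[OF assms(1)] by blast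
  let ?A = "{card X | X. X \<subseteq> V \<and> shattered_by X (in_nbhd V E r ` V)}"
  have "?A \<subseteq> card ` Pow V" by auto
  then have fA: "finite (insert 0 ?A)" using assms(1) by (meson finite_Pow_iff finite_imageI finite_insert finite_subset)
  have "\<forall>a\<in>insert 0 ?A. a \<le> (r + 2) * (2 * wcol V E r) ^ 2"
    using shattered_bound[OF assms lin cL] by auto
  then show ?thesis unfolding dist_vc_dim_def vc_dim_def using fA by (intro Max.boundedI) auto
qed

end
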